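(* Let $\alpha\in(0,1)$, $c>0$, $c'>0$, and let $K_\alpha$ be a class of finite simple undirected graphs closed under taking subgraphs such that every $H\in K_\alpha$ with $h$ vertices has a balanced separator of cardinality at most $c\,h^\alpha$. Then there exist constants $C$ and $n_0$ depending only on $\alpha,c,c'$ such that the following holds. Let $G\in K_\alpha$ be connected with $n\ge n_0$ vertices, such that every balanced separator of $G$ has at least $c' n^\alpha$ vertices. Let $\pi_{nd}$ be any nested dissection order of $G$ and $\pi$ any vertex order of $G$. Then each of the following four quantities for $\pi_{nd}$ is at most $C$ times the same quantity for $\pi$: (1) $\max_{v}$ of the number of vertices of $\mathrm{SS}(v)$; (2) $\max_v$ of the number of arcs of $\mathrm{SS}(v)$; (3) the average over all $v\in V$ of the number of vertices of $\mathrm{SS}(v)$; (4) the average over all $v\in V$ of the number of arcs of $\mathrm{SS}(v)$ (search spaces taken in $G_{\pi_{nd}}^\wedge$, respectively $G_\pi^\wedge$).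
   Context: Let $G=(V,E)$ be a finite simple undirected graph with $n=|V|$ vertices. A vertex order is a bijection $\pi:\{1,\dots,n\}\to V$; the rank of $v$ is $\pi^{-1}(v)$. Contracting a vertex $v$ in a graph means deleting $v$ and its incident edges and adding an edge between every pair of former neighbors of $v$ that are not already adjacent. The core graph $G_{\pi,i}$ is obtained from $G$ by contracting $\pi(1),\dots,\pi(i-1)$ in this order. $G_\pi^*$ is the graph on $V$ whose edge set is the union of the edge sets of all $G_{\pi,i}$, $i=1,\dots,n$ (i.e. $G$ together with all edges inserted during the contractions). $G_\pi^\wedge$ is the directed graph obtained from $G_\pi^*$ by orienting every edge from its endpoint of lower rank to its endpoint of higher rank. The search space $\mathrm{SS}(v)$ is the subgraph of $G_\pi^\wedge$ induced by the set of vertices reachable from $v$ in $G_\pi^\wedge$ (including $v$). A balanced separator of a graph with vertex set $V$, $|V|=n$, is a set $S\subseteq V$ such that $V\setminus S$ can be partitioned into sets $A,B$ (possibly empty) with no edge between $A$ and $B$ and $|A|,|B|\le 2n/3$. A nested dissection order of $G$ is defined recursively: if $G$ is empty it is the empty order; otherwise choose a balanced separator $S$ of $G$ of minimum cardinality with corresponding parts $A,B$, give the vertices of $S$ the ranks $n-|S|+1,\dots,n$ in arbitrary order, give the vertices of $A$ the ranks $1,\dots,|A|$ according to a nested dissection order of $G[A]$, and the vertices of $B$ the ranks $|A|+1,\dots,|A|+|B|$ according to a nested dissection order of $G[B]$. *)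

theory Defs
  imports Complex_Main
begin

type_synonym 'a ugraph = "'a set \<times> 'a set set"

definition verts :: "'a ugraph \<Rightarrow> 'a set" where "verts G = fst G"
definition edges :: "'a ugraph \<Rightarrow> 'a set set" where "edges G = snd G"

definition wf_graph :: "'a ugraph \<Rightarrow> bool" where
  "wf_graph G \<longleftrightarrow> finite (verts G) \<and>
     (\<forall>e\<in>edges G. \<exists>x y. e = {x, y} \<and> x \<noteq> y \<and> x \<in> verts G \<and> y \<in> verts G)"

definition subgraph :: "'a ugraph \<Rightarrow> 'a ugraph \<Rightarrow> bool" where
  "subgraph H G \<longleftrightarrow> wf_graph H \<and> verts H \<subseteq> verts G \<and> edges H \<subseteq> edges G"

definition induced :: "'a ugraph \<Rightarrow> 'a set \<Rightarrow> 'a ugraph" where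
  "induced G A = (A, {e \<in> edges G. e \<subseteq> A})"

definition connected_graph :: "'a ugraph \<Rightarrow> bool" where
  "connected_graph G \<longleftrightarrow> (\<forall>u\<in>verts G. \<forall>v\<in>verts G.
      (u, v) \<in> {(x, y). {x, y} \<in> edges G}\<^sup>*)"

definition sep_parts :: "'a ugraph \<Rightarrow> 'a set \<Rightarrow> 'a set \<Rightarrow> 'a set \<Rightarrow> bool" where
  "sep_parts G S A B \<longleftrightarrow> S \<subseteq> verts G \<and> A \<inter> B = {} \<and> A \<union> B = verts G - S \<and>
     (\<forall>a\<in>A. \<forall>b\<in>B. {a, b} \<notin> edges G) \<and>
     real (card A) \<le> 2 * real (card (verts G)) / 3 \<and>
     real (card B) \<le> 2 * real (card (verts G)) / 3"

definition balanced_separator :: "'a ugraph \<Rightarrow> 'a set \<Rightarrow> bool" where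
  "balanced_separator G S \<longleftrightarrow> (\<exists>A B. sep_parts G S A B)"

definition min_balanced_separator :: "'a ugraph \<Rightarrow> 'a set \<Rightarrow> bool" where
  "min_balanced_separator G S \<longleftrightarrow> balanced_separator G S \<and>
     (\<forall>S'. balanced_separator G S' \<longrightarrow> card S \<le> card S')"

text \<open>Vertex orders are represented as lists: position i (0-based) has rank i+1.\<close>
definition vertex_order :: "'a ugraph \<Rightarrow> 'a list \<Rightarrow> bool" where
  "vertex_order G \<pi> \<longleftrightarrow> distinct \<pi> \<and> set \<pi> = verts G"

inductive nd_order :: "'a ugraph \<Rightarrow> 'a list \<Rightarrow> bool" where
  nd_empty: "verts G = {} \<Longrightarrow> nd_order G []"
| nd_step: "\<lbrakk> verts G \<noteq> {}; min_balanced_separator G S; sep_parts G S A B;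
             nd_order (induced G A) la; nd_order (induced G B) lb;
             distinct ls; set ls = S \<rbrakk> \<Longrightarrow> nd_order G (la @ lb @ ls)"

definition contract :: "'a \<Rightarrow> 'a ugraph \<Rightarrow> 'a ugraph" where
  "contract v G = (verts G - {v},
     {e \<in> edges G. v \<notin> e} \<union> {{x, y} | x y. x \<noteq> y \<and> {v, x} \<in> edges G \<and> {v, y} \<in> edges G})"

definition contract_seq :: "'a ugraph \<Rightarrow> 'a list \<Rightarrow> 'a ugraph" where
  "contract_seq G xs = foldl (\<lambda>H v. contract v H) G xs"

text \<open>Core graph G_{pi,i} = contract_seq G (take (i-1) pi); G* edges = union over i = 1..n.\<close>
definition star_edges :: "'a ugraph \<Rightarrow> 'a list \<Rightarrow> 'a set set" where
  "star_edges G \<pi> = (\<Union>k<length \<pi>. edges (contract_seq G (take k \<pi>)))"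

definition up_arcs :: "'a ugraph \<Rightarrow> 'a list \<Rightarrow> ('a \<times> 'a) set" where
  "up_arcs G \<pi> = {(\<pi> ! i, \<pi> ! j) | i j. i < j \<and> j < length \<pi> \<and> {\<pi> ! i, \<pi> ! j} \<in> star_edges G \<pi>}"

definition ss_verts :: "'a ugraph \<Rightarrow> 'a list \<Rightarrow> 'a \<Rightarrow> 'a set" where
  "ss_verts G \<pi> v = {w. (v, w) \<in> (up_arcs G \<pi>)\<^sup>*}"

definition ss_arcs :: "'a ugraph \<Rightarrow> 'a list \<Rightarrow> 'a \<Rightarrow> ('a \<times> 'a) set" where
  "ss_arcs G \<pi> v = up_arcs G \<pi> \<inter> (ss_verts G \<pi> v \<times> ss_verts G \<pi> v)"

definition max_ss_verts :: "'a ugraph \<Rightarrow> 'a list \<Rightarrow> real" where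
  "max_ss_verts G \<pi> = real (Max ((\<lambda>v. card (ss_verts G \<pi> v)) ` verts G))"

definition max_ss_arcs :: "'a ugraph \<Rightarrow> 'a list \<Rightarrow> real" where
  "max_ss_arcs G \<pi> = real (Max ((\<lambda>v. card (ss_arcs G \<pi> v)) ` verts G))"

definition avg_ss_verts :: "'a ugraph \<Rightarrow> 'a list \<Rightarrow> real" where
  "avg_ss_verts G \<pi> = (\<Sum>v\<in>verts G. real (card (ss_verts G \<pi> v))) / real (card (verts G))"

definition avg_ss_arcs :: "'a ugraph \<Rightarrow> 'a list \<Rightarrow> real" where
  "avg_ss_arcs G \<pi> = (\<Sum>v\<in>verts G. real (card (ss_arcs G \<pi> v))) / real (card (verts G))"

definition subgraph_closed :: "'a ugraph set \<Rightarrow> bool" where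
  "subgraph_closed K \<longleftrightarrow> (\<forall>G\<in>K. wf_graph G) \<and> (\<forall>G\<in>K. \<forall>H. subgraph H G \<longrightarrow> H \<in> K)"

end

theory Submission
  imports Defs
begin
inductive ipath :: "'a set set \<Rightarrow> 'a set \<Rightarrow> 'a \<Rightarrow> 'a \<Rightarrow> bool" for E X where
  ip_edge: "{x,y} \<in> E \<Longrightarrow> ipath E X x y"
| ip_step: "{x,z} \<in> E \<Longrightarrow> z \<in> X \<Longrightarrow> ipath E X z y \<Longrightarrow> ipath E X x y"

lemma ipath_mono: "ipath E X x y \<Longrightarrow> X \<subseteq> Y \<Longrightarrow> ipath E Y x y"
  by (induction rule: ipath.induct) (auto intro: ipath.intros)

lemma ipath_trans: "ipath E X x z \<Longrightarrow> z \<in> X \<Longrightarrow> ipath E X z y \<Longrightarrow> ipath E X x y"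
  by (induction rule: ipath.induct) (auto intro: ipath.intros)

lemma ipath_sym: "ipath E X x y \<Longrightarrow> ipath E X y x"
proof (induction rule: ipath.induct)
  case (ip_edge x y) then show ?case by (simp add: insert_commute ipath.ip_edge)
next
  case (ip_step x z y)
  have "ipath E X z x" using ip_step(1) by (simp add: insert_commute ipath.ip_edge)
  then show ?case using ip_step ipath_trans by metis
qed

lemma ipath_insert_split: "ipath E (insert v X) x y \<Longrightarrow> ipath E X x y \<or> (ipath E X x v \<and> ipath E X v y)"
proof (induction rule: ipath.induct)
  case (ip_edge x y) then show ?case by (simp add: ipath.ip_edge)
next
  case (ip_step x z y)
  show ?case
  proof (cases "z = v")
    case True then show ?thesis using ip_step(1,4) ipath.ip_edge by metis
  next
    case False then have "z \<in> X" using ip_step by auto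
    then show ?thesis using ip_step(1,4) ipath.ip_step by metis
  qed
qed

lemma ipath_insert_iff: "ipath E (insert v X) x y \<longleftrightarrow> ipath E X x y \<or> (ipath E X x v \<and> ipath E X v y)"
proof
  assume "ipath E (insert v X) x y" then show "ipath E X x y \<or> (ipath E X x v \<and> ipath E X v y)"
    by (rule ipath_insert_split)
next
  assume a: "ipath E X x y \<or> (ipath E X x v \<and> ipath E X v y)"
  show "ipath E (insert v X) x y"
  proof (cases "ipath E X x y")
    case True then show ?thesis by (rule ipath_mono) auto
  next
    case False
    then have "ipath E (insert v X) x v" "ipath E (insert v X) v y" using a ipath_mono[of E X _ _ "insert v X"] by auto
    then show ?thesis using ipath_trans[of E "insert v X" x v y] by blast
  qed
qed

lemma ipath_same_start: "ipath E (insert v X) v y \<Longrightarrow> ipath E X v y"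
  using ipath_insert_split[of E v X v y] by blast

lemma ipath_empty: "ipath E {} x y \<Longrightarrow> {x,y} \<in> E"
  by (erule ipath.cases) auto

definition fillE :: "'a set \<Rightarrow> 'a set set \<Rightarrow> 'a set \<Rightarrow> 'a set set" where
  "fillE V E X = {{x,y} | x y. x \<noteq> y \<and> x \<in> V - X \<and> y \<in> V - X \<and> ipath E X x y}"

lemma wf_edge: "wf_graph G \<Longrightarrow> {x,y} \<in> edges G \<Longrightarrow> x \<noteq> y \<and> x \<in> verts G \<and> y \<in> verts G"
proof -
  assume wf: "wf_graph G" and e: "{x,y} \<in> edges G"
  then obtain a b where ab: "{x,y} = {a,b}" "a \<noteq> b" "a \<in> verts G" "b \<in> verts G"
    unfolding wf_graph_def by blast
  have "x \<in> {a,b}" "y \<in> {a,b}" using ab(1) by (metis insertI1, metis insertI1 insert_commute)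
  moreover have "x \<noteq> y" using ab(1,2) by (auto simp: doubleton_eq_iff)
  ultimately show ?thesis using ab by auto
qed

lemma fillE_empty: "wf_graph G \<Longrightarrow> fillE (verts G) (edges G) {} = edges G"
proof -
  assume wf: "wf_graph G"
  show ?thesis
  proof
    show "fillE (verts G) (edges G) {} \<subseteq> edges G"
    proof
      fix e assume "e \<in> fillE (verts G) (edges G) {}"
      then obtain x y where "e = {x,y}" "ipath (edges G) {} x y" unfolding fillE_def by blast
      then show "e \<in> edges G" using ipath_empty by metis
    qed
    show "edges G \<subseteq> fillE (verts G) (edges G) {}"
    proof
      fix e assume e: "e \<in> edges G"
      then obtain x y where xy: "e = {x,y}" "x \<noteq> y" "x \<in> verts G" "y \<in> verts G"
        using wf unfolding wf_graph_def by blast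
      have "ipath (edges G) {} x y" using e xy(1) by (simp add: ip_edge)
      then show "e \<in> fillE (verts G) (edges G) {}" unfolding fillE_def
        using xy by blast
    qed
  qed
qed

lemma fillE_mem: "{v,x} \<in> fillE V E X \<longleftrightarrow> v \<noteq> x \<and> v \<in> V - X \<and> x \<in> V - X \<and> ipath E X v x"
  unfolding fillE_def
  apply (auto simp: doubleton_eq_iff)
  using ipath_sym by metis+

lemma contract_seq_snoc: "contract_seq G (xs @ [v]) = contract v (contract_seq G xs)"
  by (simp add: contract_seq_def)

lemma contract_edges: "edges (contract v H) = {e \<in> edges H. v \<notin> e} \<union> {{x, y} | x y. x \<noteq> y \<and> {v, x} \<in> edges H \<and> {v, y} \<in> edges H}"
  by (simp add: contract_def edges_def)

lemma contract_verts: "verts (contract v H) = verts H - {v}"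
  by (simp add: contract_def verts_def)

lemma fillE_step:
  assumes v: "v \<in> V" "v \<notin> X"
  shows "{e \<in> fillE V E X. v \<notin> e} \<union> {{x, y} | x y. x \<noteq> y \<and> {v, x} \<in> fillE V E X \<and> {v, y} \<in> fillE V E X}
     = fillE V E (insert v X)"
proof
  show "{e \<in> fillE V E X. v \<notin> e} \<union> {{x, y} | x y. x \<noteq> y \<and> {v, x} \<in> fillE V E X \<and> {v, y} \<in> fillE V E X}
        \<subseteq> fillE V E (insert v X)"
  proof
    fix e assume "e \<in> {e \<in> fillE V E X. v \<notin> e} \<union> {{x, y} | x y. x \<noteq> y \<and> {v, x} \<in> fillE V E X \<and> {v, y} \<in> fillE V E X}"
    then show "e \<in> fillE V E (insert v X)"
    proof
      assume "e \<in> {e \<in> fillE V E X. v \<notin> e}"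
      then obtain x y where xy: "e = {x,y}" "x \<noteq> y" "x \<in> V - X" "y \<in> V - X" "ipath E X x y" "v \<notin> e"
        unfolding fillE_def by blast
      have "ipath E (insert v X) x y" using xy(5) by (rule ipath_mono) auto
      moreover have "x \<in> V - insert v X" "y \<in> V - insert v X" using xy by auto
      ultimately show ?thesis unfolding fillE_def using xy(1,2) by blast
    next
      assume "e \<in> {{x, y} | x y. x \<noteq> y \<and> {v, x} \<in> fillE V E X \<and> {v, y} \<in> fillE V E X}"
      then obtain x y where e: "e = {x,y}" "x \<noteq> y" "{v, x} \<in> fillE V E X" "{v, y} \<in> fillE V E X" by blast
      have hx: "v \<noteq> x \<and> x \<in> V - X \<and> ipath E X v x" using e(3) fillE_mem[of v x V E X] by blast
      have hy: "v \<noteq> y \<and> y \<in> V - X \<and> ipath E X v y" using e(4) fillE_mem[of v y V E X] by blast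
      have "ipath E X x v" using hx ipath_sym by metis
      then have "ipath E (insert v X) x y" using hy ipath_insert_iff[of E v X x y] by blast
      moreover have "x \<in> V - insert v X" "y \<in> V - insert v X" using hx hy by auto
      ultimately show ?thesis unfolding fillE_def using e(1,2) by blast
    qed
  qed
next
  show "fillE V E (insert v X) \<subseteq> {e \<in> fillE V E X. v \<notin> e} \<union> {{x, y} | x y. x \<noteq> y \<and> {v, x} \<in> fillE V E X \<and> {v, y} \<in> fillE V E X}"
  proof
    fix e assume "e \<in> fillE V E (insert v X)"
    then obtain x y where e: "e = {x,y}" "x \<noteq> y" "x \<in> V - insert v X" "y \<in> V - insert v X" "ipath E (insert v X) x y"
      unfolding fillE_def by blast
    from e(5) have "ipath E X x y \<or> (ipath E X x v \<and> ipath E X v y)" by (rule ipath_insert_split)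
    then show "e \<in> {e \<in> fillE V E X. v \<notin> e} \<union> {{x, y} | x y. x \<noteq> y \<and> {v, x} \<in> fillE V E X \<and> {v, y} \<in> fillE V E X}"
    proof
      assume "ipath E X x y"
      moreover have "x \<in> V - X" "y \<in> V - X" using e by auto
      ultimately have "e \<in> fillE V E X" unfolding fillE_def using e(1,2) by blast
      moreover have "v \<notin> e" using e by auto
      ultimately show ?thesis by blast
    next
      assume a: "ipath E X x v \<and> ipath E X v y"
      have "ipath E X v x" using a ipath_sym by metis
      then have "{v,x} \<in> fillE V E X" unfolding fillE_mem using e v by auto
      moreover have "{v,y} \<in> fillE V E X" unfolding fillE_mem using a e v by auto
      ultimately show ?thesis using e(1,2) by blast
    qed
  qed
qed

lemma contract_seq_inv:
  assumes wf: "wf_graph G" and "distinct xs" and "set xs \<subseteq> verts G"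
  shows "verts (contract_seq G xs) = verts G - set xs \<and> edges (contract_seq G xs) = fillE (verts G) (edges G) (set xs)"
  using assms(2,3)
proof (induction xs rule: rev_induct)
  case Nil then show ?case using fillE_empty[OF wf] by (simp add: contract_seq_def)
next
  case (snoc v xs)
  have IH: "verts (contract_seq G xs) = verts G - set xs" "edges (contract_seq G xs) = fillE (verts G) (edges G) (set xs)"
    using snoc by auto
  have v: "v \<in> verts G" "v \<notin> set xs" using snoc by auto
  have "edges (contract_seq G (xs @ [v])) = fillE (verts G) (edges G) (insert v (set xs))"
    unfolding contract_seq_snoc contract_edges IH(2) using fillE_step[OF v] .
  moreover have "verts (contract_seq G (xs @ [v])) = verts G - set (xs @ [v])"
    unfolding contract_seq_snoc contract_verts IH(1) by auto
  ultimately show ?case by simp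
qed

definition rk :: "'a list \<Rightarrow> 'a \<Rightarrow> nat" where
  "rk xs v = (THE i. i < length xs \<and> xs ! i = v)"

lemma rk_props: "distinct xs \<Longrightarrow> v \<in> set xs \<Longrightarrow> rk xs v < length xs \<and> xs ! rk xs v = v"
proof -
  assume d: "distinct xs" and v: "v \<in> set xs"
  then obtain i where i: "i < length xs" "xs ! i = v" by (auto simp: in_set_conv_nth)
  have "rk xs v = i" unfolding rk_def
    using i d by (auto intro!: the_equality simp: nth_eq_iff_index_eq)
  then show ?thesis using i by simp
qed

lemma rk_nth: "distinct xs \<Longrightarrow> i < length xs \<Longrightarrow> rk xs (xs ! i) = i"
  unfolding rk_def by (auto intro!: the_equality simp: nth_eq_iff_index_eq)

lemma rk_inj: "distinct xs \<Longrightarrow> a \<in> set xs \<Longrightarrow> b \<in> set xs \<Longrightarrow> rk xs a = rk xs b \<Longrightarrow> a = b"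
  by (metis rk_props)

lemma set_take_rk: "distinct xs \<Longrightarrow> set (take k xs) = {u \<in> set xs. rk xs u < k}"
proof -
  assume d: "distinct xs"
  show ?thesis
  proof
    show "set (take k xs) \<subseteq> {u \<in> set xs. rk xs u < k}"
    proof
      fix u assume "u \<in> set (take k xs)"
      then obtain i where "i < length (take k xs)" "take k xs ! i = u" by (auto simp: in_set_conv_nth)
      then have "i < k" "i < length xs" "xs ! i = u" by auto
      then show "u \<in> {u \<in> set xs. rk xs u < k}" using rk_nth[OF d] by auto
    qed
    show "{u \<in> set xs. rk xs u < k} \<subseteq> set (take k xs)"
    proof
      fix u assume "u \<in> {u \<in> set xs. rk xs u < k}"
      then have "u \<in> set xs" "rk xs u < k" by auto
      then have "rk xs u < length (take k xs)" "take k xs ! rk xs u = u" using rk_props[OF d] by auto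
      then show "u \<in> set (take k xs)" by (metis nth_mem)
    qed
  qed
qed

definition low :: "'a list \<Rightarrow> 'a \<Rightarrow> 'a set" where
  "low xs w = {u \<in> set xs. rk xs u < rk xs w}"

definition SSp :: "'a set set \<Rightarrow> 'a list \<Rightarrow> 'a \<Rightarrow> 'a set" where
  "SSp E xs v = insert v {w \<in> set xs. rk xs v < rk xs w \<and> ipath E (low xs w) v w}"

locale ord_graph =
  fixes G :: "'a ugraph" and \<pi> :: "'a list"
  assumes wf: "wf_graph G" and dist: "distinct \<pi>" and setpi: "set \<pi> = verts G"
begin

abbreviation "V \<equiv> verts G"
abbreviation "E \<equiv> edges G"
abbreviation "r \<equiv> rk \<pi>"

lemma star_mem: "e \<in> star_edges G \<pi> \<longleftrightarrow> (\<exists>k<length \<pi>. e \<in> fillE V E (set (take k \<pi>)))"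
proof -
  have "\<And>k. edges (contract_seq G (take k \<pi>)) = fillE V E (set (take k \<pi>))"
    using contract_seq_inv[OF wf, of "take k \<pi>" for k] dist setpi
    by (metis distinct_take set_take_subset)
  then show ?thesis unfolding star_edges_def by auto
qed

lemma up_arc_char: "(a,b) \<in> up_arcs G \<pi> \<longleftrightarrow> a \<in> set \<pi> \<and> b \<in> set \<pi> \<and> r a < r b \<and> {a,b} \<in> star_edges G \<pi>"
proof
  assume "(a,b) \<in> up_arcs G \<pi>"
  then obtain i j where ij: "a = \<pi>!i" "b = \<pi>!j" "i < j" "j < length \<pi>" "{\<pi>!i, \<pi>!j} \<in> star_edges G \<pi>"
    unfolding up_arcs_def by blast
  then show "a \<in> set \<pi> \<and> b \<in> set \<pi> \<and> r a < r b \<and> {a,b} \<in> star_edges G \<pi>"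
    using rk_nth[OF dist] by auto
next
  assume h: "a \<in> set \<pi> \<and> b \<in> set \<pi> \<and> r a < r b \<and> {a,b} \<in> star_edges G \<pi>"
  then have "a = \<pi> ! r a" "b = \<pi> ! r b" "r b < length \<pi>" using rk_props[OF dist] by auto
  then show "(a,b) \<in> up_arcs G \<pi>" unfolding up_arcs_def using h by force
qed

lemma low_take: "low \<pi> w = set (take (r w) \<pi>)"
  unfolding low_def using set_take_rk[OF dist] by auto

lemma reach_ipath: "(v,w) \<in> (up_arcs G \<pi>)\<^sup>* \<Longrightarrow> v = w \<or> (v \<in> set \<pi> \<and> w \<in> set \<pi> \<and> r v < r w \<and> ipath E (low \<pi> w) v w)"
proof (induction rule: rtrancl_induct)
  case base then show ?case by simp
next
  case (step a b)
  from step(2) have ab: "a \<in> set \<pi>" "b \<in> set \<pi>" "r a < r b" "{a,b} \<in> star_edges G \<pi>"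
    using up_arc_char by auto
  then obtain k where k: "k < length \<pi>" "{a,b} \<in> fillE V E (set (take k \<pi>))" using star_mem by auto
  then have fk: "a \<noteq> b" "a \<in> V - set (take k \<pi>)" "ipath E (set (take k \<pi>)) a b"
    using fillE_mem[of a b V E "set (take k \<pi>)"] by auto
  have "set (take k \<pi>) \<subseteq> low \<pi> b"
  proof
    fix u assume "u \<in> set (take k \<pi>)"
    then have "u \<in> set \<pi>" "r u < k" using set_take_rk[OF dist] by auto
    moreover have "\<not> r a < k" using fk(2) ab(1) set_take_rk[OF dist, of k] by auto
    ultimately show "u \<in> low \<pi> b" unfolding low_def using ab by auto
  qed
  then have iab: "ipath E (low \<pi> b) a b" using fk(3) ipath_mono by metis
  show ?case
  proof (cases "v = a")
    case True then show ?thesis using iab ab by auto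
  next
    case False
    then have h: "v \<in> set \<pi>" "r v < r a" "ipath E (low \<pi> a) v a" using step(3) by auto
    have "low \<pi> a \<subseteq> low \<pi> b" unfolding low_def using ab by auto
    then have "ipath E (low \<pi> b) v a" using h(3) ipath_mono by metis
    moreover have "a \<in> low \<pi> b" unfolding low_def using ab by auto
    ultimately have "ipath E (low \<pi> b) v b" using iab ipath_trans by metis
    then show ?thesis using h ab by auto
  qed
qed

lemma ss_sub_SSp: "ss_verts G \<pi> v \<subseteq> SSp E \<pi> v"
  unfolding ss_verts_def SSp_def using reach_ipath by blast

end

lemma ipath_split_gen: "ipath E X a b \<Longrightarrow> ipath E Y a b \<or> (\<exists>z\<in>X. z \<notin> Y \<and> ipath E Y a z \<and> ipath E X z b)"
proof (induction rule: ipath.induct)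
  case (ip_edge x y) then show ?case by (simp add: ipath.ip_edge)
next
  case (ip_step x z y)
  show ?case
  proof (cases "z \<in> Y")
    case False
    then show ?thesis using ip_step(1,2,3) ipath.ip_edge by metis
  next
    case True
    from ip_step(4) show ?thesis
    proof
      assume "ipath E Y z y" then show ?thesis using True ip_step(1) ipath.ip_step by metis
    next
      assume "\<exists>z'\<in>X. z' \<notin> Y \<and> ipath E Y z z' \<and> ipath E X z' y"
      then obtain z' where "z' \<in> X" "z' \<notin> Y" "ipath E Y z z'" "ipath E X z' y" by blast
      moreover have "ipath E Y x z'" using True ip_step(1) \<open>ipath E Y z z'\<close> ipath.ip_step by metis
      ultimately show ?thesis by blast
    qed
  qed
qed

context ord_graph begin

lemma arc_from_ipath:
  assumes "v \<in> set \<pi>" "y \<in> set \<pi>" "r v < r y" "ipath E (low \<pi> v) v y"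
  shows "(v,y) \<in> up_arcs G \<pi>"
proof -
  have "v \<notin> low \<pi> v" "y \<notin> low \<pi> v" unfolding low_def using assms by auto
  then have "{v,y} \<in> fillE V E (set (take (r v) \<pi>))"
    unfolding fillE_def low_take[symmetric] using assms setpi by auto
  moreover have "r v < length \<pi>" using rk_props[OF dist assms(1)] by auto
  ultimately have "{v,y} \<in> star_edges G \<pi>" using star_mem by auto
  then show ?thesis using up_arc_char assms by auto
qed

lemma ipath_reach:
  shows "v \<in> set \<pi> \<Longrightarrow> w \<in> set \<pi> \<Longrightarrow> r v < r w \<Longrightarrow> ipath E (low \<pi> w) v w \<Longrightarrow> (v,w) \<in> (up_arcs G \<pi>)\<^sup>*"
proof (induction "r w - r v" arbitrary: v rule: less_induct)
  case less
  let ?Y = "insert v (low \<pi> v)"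
  from ipath_split_gen[OF less(5), of ?Y]
  show ?case
  proof
    assume "ipath E ?Y v w"
    then have "ipath E (low \<pi> v) v w" by (rule ipath_same_start)
    then have "(v,w) \<in> up_arcs G \<pi>" using arc_from_ipath less by auto
    then show ?thesis by auto
  next
    assume "\<exists>z\<in>low \<pi> w. z \<notin> ?Y \<and> ipath E ?Y v z \<and> ipath E (low \<pi> w) z w"
    then obtain z where z: "z \<in> low \<pi> w" "z \<notin> ?Y" "ipath E ?Y v z" "ipath E (low \<pi> w) z w" by blast
    have zs: "z \<in> set \<pi>" "r z < r w" using z(1) unfolding low_def by auto
    have "z \<noteq> v" "\<not> r z < r v" using z(2) zs unfolding low_def by auto
    then have "r v < r z" using rk_inj[OF dist less(2) zs(1)] by (metis linorder_neqE_nat)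
    have "ipath E (low \<pi> v) v z" using z(3) by (rule ipath_same_start)
    then have a1: "(v,z) \<in> up_arcs G \<pi>" using arc_from_ipath less(2) zs \<open>r v < r z\<close> by auto
    have "(z,w) \<in> (up_arcs G \<pi>)\<^sup>*" using less(1)[of z] zs z(4) less(3) \<open>r v < r z\<close> by auto
    then show ?thesis using a1 by auto
  qed
qed

end

lemma nd_set: "nd_order G l \<Longrightarrow> distinct l \<and> set l = verts G"
proof (induction rule: nd_order.induct)
  case (nd_empty G) then show ?case by simp
next
  case (nd_step G S A B la lb ls)
  have vA: "verts (induced G A) = A" "verts (induced G B) = B" by (auto simp: induced_def verts_def)
  from nd_step.hyps(3) have "S \<subseteq> verts G" "A \<inter> B = {}" "A \<union> B = verts G - S" unfolding sep_parts_def by auto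
  then show ?case using nd_step vA by auto
qed

lemma rk_append1: "distinct (xs @ ys) \<Longrightarrow> u \<in> set xs \<Longrightarrow> rk (xs @ ys) u = rk xs u"
proof -
  assume d: "distinct (xs @ ys)" and u: "u \<in> set xs"
  have d1: "distinct xs" using d by auto
  have "rk xs u < length xs" "xs ! rk xs u = u" using rk_props[OF d1 u] by auto
  then have "(xs @ ys) ! rk xs u = u" "rk xs u < length (xs @ ys)" by (auto simp: nth_append)
  then show ?thesis using rk_nth[OF d] by metis
qed

lemma rk_append2: "distinct (xs @ ys) \<Longrightarrow> u \<in> set ys \<Longrightarrow> rk (xs @ ys) u = length xs + rk ys u"
proof -
  assume d: "distinct (xs @ ys)" and u: "u \<in> set ys"
  have d1: "distinct ys" using d by auto
  have "rk ys u < length ys" "ys ! rk ys u = u" using rk_props[OF d1 u] by auto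
  then have "(xs @ ys) ! (length xs + rk ys u) = u" "length xs + rk ys u < length (xs @ ys)" by (auto simp: nth_append)
  then show ?thesis using rk_nth[OF d] by metis
qed

lemma ipath_restrict:
  assumes "ipath E X x y" "x \<in> P" "X \<subseteq> P \<union> Q" "y \<in> P \<union> Q" "\<forall>a\<in>P. \<forall>b\<in>Q. {a,b} \<notin> E"
  shows "y \<in> P \<and> ipath {e \<in> E. e \<subseteq> P} (X \<inter> P) x y"
  using assms
proof (induction rule: ipath.induct)
  case (ip_edge x y)
  then have "y \<in> P" by blast
  then show ?case using ip_edge by (auto intro: ipath.ip_edge)
next
  case (ip_step x z y)
  then have "z \<in> P" by blast
  then have "y \<in> P \<and> ipath {e \<in> E. e \<subseteq> P} (X \<inter> P) z y" using ip_step by blast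
  moreover have "{x,z} \<in> {e \<in> E. e \<subseteq> P}" using ip_step \<open>z \<in> P\<close> by auto
  ultimately show ?case using \<open>z \<in> P\<close> ip_step(2) ipath.ip_step[where E="{e \<in> E. e \<subseteq> P}" and X="X \<inter> P"] by blast
qed

lemma SSp_part:
  assumes d: "distinct l" and sl: "set l = P \<union> Q \<union> S" and dj: "P \<inter> Q = {}" "P \<inter> S = {}" "Q \<inter> S = {}"
    and noe: "\<forall>a\<in>P. \<forall>b\<in>Q. {a,b} \<notin> E"
    and top: "\<forall>s\<in>S. \<forall>u\<in>P \<union> Q. rk l u < rk l s"
    and dlp: "distinct lp" and slp: "set lp = P"
    and comp: "\<forall>u\<in>P. \<forall>w\<in>P. rk l u < rk l w \<longleftrightarrow> rk lp u < rk lp w"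
    and v: "v \<in> P"
  shows "SSp E l v \<subseteq> SSp {e \<in> E. e \<subseteq> P} lp v \<union> S"
proof
  fix w assume w: "w \<in> SSp E l v"
  show "w \<in> SSp {e \<in> E. e \<subseteq> P} lp v \<union> S"
  proof (cases "w = v \<or> w \<in> S")
    case True then show ?thesis unfolding SSp_def by auto
  next
    case False
    then have w1: "w \<in> set l" "rk l v < rk l w" "ipath E (low l w) v w" "w \<notin> S" using w unfolding SSp_def by auto
    then have wPQ: "w \<in> P \<union> Q" using sl by auto
    have lowsub: "low l w \<subseteq> P \<union> Q"
    proof
      fix u assume "u \<in> low l w"
      then have "u \<in> set l" "rk l u < rk l w" unfolding low_def by auto
      show "u \<in> P \<union> Q"
      proof (rule ccontr)
        assume "u \<notin> P \<union> Q"
        then have "u \<in> S" using sl \<open>u \<in> set l\<close> by auto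
        then have "rk l w < rk l u" using top wPQ by auto
        then show False using \<open>rk l u < rk l w\<close> by linarith
      qed
    qed
    from ipath_restrict[OF w1(3) v lowsub wPQ noe]
    have wP: "w \<in> P" and ip: "ipath {e \<in> E. e \<subseteq> P} (low l w \<inter> P) v w" by auto
    have "low l w \<inter> P = low lp w" unfolding low_def using comp wP slp sl by auto
    moreover have "rk lp v < rk lp w" using comp v wP w1(2) by auto
    ultimately show ?thesis unfolding SSp_def using ip wP slp by auto
  qed
qed

lemma induced_subgraph: "wf_graph G \<Longrightarrow> A \<subseteq> verts G \<Longrightarrow> subgraph (induced G A) G"
proof -
  assume wf: "wf_graph G" and A: "A \<subseteq> verts G"
  have fin: "finite A" using wf A unfolding wf_graph_def using finite_subset by blast
  have "\<forall>e\<in>edges (induced G A). \<exists>x y. e = {x, y} \<and> x \<noteq> y \<and> x \<in> verts (induced G A) \<and> y \<in> verts (induced G A)"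
  proof
    fix e assume "e \<in> edges (induced G A)"
    then have e: "e \<in> edges G" "e \<subseteq> A" by (auto simp: induced_def edges_def)
    then obtain x y where "e = {x,y}" "x \<noteq> y" using wf unfolding wf_graph_def by blast
    then show "\<exists>x y. e = {x, y} \<and> x \<noteq> y \<and> x \<in> verts (induced G A) \<and> y \<in> verts (induced G A)"
      using e by (auto simp: induced_def verts_def)
  qed
  then show ?thesis unfolding subgraph_def wf_graph_def using fin A
    by (auto simp: induced_def verts_def edges_def)
qed

lemma edges_induced: "edges (induced G A) = {e \<in> edges G. e \<subseteq> A}"
  by (simp add: induced_def edges_def)
lemma verts_induced: "verts (induced G A) = A"
  by (simp add: induced_def verts_def)

lemma SSp_fin: "SSp E l v \<subseteq> insert v (set l)"
  unfolding SSp_def by auto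

lemma nd_bound:
  fixes \<alpha> c D :: real
  assumes K: "subgraph_closed K"
    and sepK: "\<forall>H\<in>K. \<exists>S. balanced_separator H S \<and> real (card S) \<le> c * real (card (verts H)) powr \<alpha>"
    and c: "c > 0" and al: "0 < \<alpha>" and Ddef: "D = c / (1 - (2/3) powr \<alpha>)"
  shows "nd_order G l \<Longrightarrow> G \<in> K \<Longrightarrow> \<forall>v\<in>verts G. real (card (SSp (edges G) l v)) \<le> D * real (card (verts G)) powr \<alpha>"
proof (induction rule: nd_order.induct)
  case (nd_empty G) then show ?case by simp
next
  case (nd_step G S A B la lb ls)
  let ?n = "real (card (verts G))"
  have q: "(2/3::real) powr \<alpha> < 1" "0 < (2/3::real) powr \<alpha>" using powr_less_mono2[of \<alpha> "2/3" 1] al by auto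
  have Dpos: "D \<ge> c" unfolding Ddef using q c by (simp add: field_simps)
  have q1: "1 - (2/3::real) powr \<alpha> \<noteq> 0" using q by auto
  have DD: "D * (2/3) powr \<alpha> + c = D" unfolding Ddef using q1 by (simp add: field_simps)
  have wf: "wf_graph G" using K nd_step.prems unfolding subgraph_closed_def by auto
  have sp: "S \<subseteq> verts G" "A \<inter> B = {}" "A \<union> B = verts G - S" "\<forall>a\<in>A. \<forall>b\<in>B. {a, b} \<notin> edges G"
     "real (card A) \<le> 2 * ?n / 3" "real (card B) \<le> 2 * ?n / 3"
    using nd_step.hyps(3) unfolding sep_parts_def by auto
  have sub: "subgraph (induced G A) G" "subgraph (induced G B) G" using induced_subgraph[OF wf] sp by auto
  have AK: "induced G A \<in> K" "induced G B \<in> K"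
    using K nd_step.prems sub unfolding subgraph_closed_def by blast+
  have IHA: "\<forall>v\<in>A. real (card (SSp {e \<in> edges G. e \<subseteq> A} la v)) \<le> D * real (card A) powr \<alpha>"
    using nd_step.IH(1) AK by (simp add: edges_induced verts_induced)
  have IHB: "\<forall>v\<in>B. real (card (SSp {e \<in> edges G. e \<subseteq> B} lb v)) \<le> D * real (card B) powr \<alpha>"
    using nd_step.IH(2) AK by (simp add: edges_induced verts_induced)
  have Sc: "real (card S) \<le> c * ?n powr \<alpha>"
  proof -
    obtain S0 where "balanced_separator G S0" "real (card S0) \<le> c * ?n powr \<alpha>" using sepK nd_step.prems by blast
    moreover have "card S \<le> card S0" using nd_step.hyps(2) \<open>balanced_separator G S0\<close> unfolding min_balanced_separator_def by auto
    ultimately show ?thesis by linarith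
  qed
  have sets: "distinct la \<and> set la = A" "distinct lb \<and> set lb = B"
    using nd_set nd_step.hyps(4,5) verts_induced by metis+
  let ?l = "la @ lb @ ls"
  have dl: "distinct ?l" "set ?l = verts G" using nd_set[OF nd_order.nd_step[OF nd_step.hyps]] by auto
  have finS: "finite S" using wf sp(1) unfolding wf_graph_def using finite_subset by blast
  have rkA: "\<And>u. u \<in> A \<Longrightarrow> rk ?l u = rk la u" using rk_append1 dl(1) sets by metis
  have rkB: "\<And>u. u \<in> B \<Longrightarrow> rk ?l u = length la + rk lb u"
  proof -
    fix u assume "u \<in> B"
    have "rk ?l u = length la + rk (lb @ ls) u" using rk_append2[OF dl(1)] sets \<open>u \<in> B\<close> by auto
    moreover have "rk (lb @ ls) u = rk lb u" using rk_append1[of lb ls u] dl(1) sets \<open>u \<in> B\<close> by auto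
    ultimately show "rk ?l u = length la + rk lb u" by simp
  qed
  have rkS: "\<And>u. u \<in> S \<Longrightarrow> rk ?l u = length la + length lb + rk ls u"
  proof -
    fix u assume "u \<in> S"
    have "rk ?l u = length la + rk (lb @ ls) u" using rk_append2[OF dl(1)] nd_step.hyps(7) \<open>u \<in> S\<close> by auto
    moreover have "rk (lb @ ls) u = length lb + rk ls u" using rk_append2[of lb ls u] dl(1) nd_step.hyps(7) \<open>u \<in> S\<close> by auto
    ultimately show "rk ?l u = length la + length lb + rk ls u" by simp
  qed
  have rkA_lt: "\<And>u. u \<in> A \<Longrightarrow> rk la u < length la" using rk_props sets by metis
  have rkB_lt: "\<And>u. u \<in> B \<Longrightarrow> rk lb u < length lb" using rk_props sets by metis
  have top: "\<forall>s\<in>S. \<forall>u\<in>A \<union> B. rk ?l u < rk ?l s"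
    using rkA rkB rkS rkA_lt rkB_lt by fastforce
  have slAB: "set ?l = A \<union> B \<union> S" using dl sp by auto
  have djAS: "A \<inter> S = {}" "B \<inter> S = {}" using sp by auto
  have npow: "\<And>m. real m \<le> 2 * ?n / 3 \<Longrightarrow> real m powr \<alpha> \<le> (2/3) powr \<alpha> * ?n powr \<alpha>"
  proof -
    fix m :: nat assume "real m \<le> 2 * ?n / 3"
    then have "real m powr \<alpha> \<le> (2/3 * ?n) powr \<alpha>" using al by (intro powr_mono2) auto
    also have "\<dots> = (2/3) powr \<alpha> * ?n powr \<alpha>" by (rule powr_mult)
    finally show "real m powr \<alpha> \<le> (2/3) powr \<alpha> * ?n powr \<alpha>" .
  qed
  have npos: "0 \<le> ?n powr \<alpha>" by simp
  show ?case
  proof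
    fix v assume v: "v \<in> verts G"
    have "v \<in> A \<or> v \<in> B \<or> v \<in> S" using v sp by auto
    then show "real (card (SSp (edges G) ?l v)) \<le> D * ?n powr \<alpha>"
    proof (elim disjE)
      assume vA: "v \<in> A"
      have sub: "SSp (edges G) ?l v \<subseteq> SSp {e \<in> edges G. e \<subseteq> A} la v \<union> S"
        by (rule SSp_part[OF dl(1) slAB sp(2) djAS sp(4) top _ _ _ vA]) (use sets rkA in auto)
      have fin1: "finite (SSp {e \<in> edges G. e \<subseteq> A} la v)"
        using SSp_fin[of "{e \<in> edges G. e \<subseteq> A}" la v] by (rule finite_subset) simp
      have c1: "card (SSp (edges G) ?l v) \<le> card (SSp {e \<in> edges G. e \<subseteq> A} la v \<union> S)"
        by (rule card_mono[OF _ sub]) (use fin1 finS in simp)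
      have c2: "card (SSp {e \<in> edges G. e \<subseteq> A} la v \<union> S) \<le> card (SSp {e \<in> edges G. e \<subseteq> A} la v) + card S"
        by (rule card_Un_le)
      have c3: "real (card (SSp (edges G) ?l v)) \<le> real (card (SSp {e \<in> edges G. e \<subseteq> A} la v)) + real (card S)"
        using le_trans[OF c1 c2] by (metis of_nat_add of_nat_le_iff)
      have c4: "real (card (SSp {e \<in> edges G. e \<subseteq> A} la v)) \<le> D * real (card A) powr \<alpha>" using IHA vA by blast
      have "real (card (SSp (edges G) ?l v)) \<le> D * real (card A) powr \<alpha> + c * ?n powr \<alpha>"
        using c3 c4 Sc by linarith
      also have "\<dots> \<le> D * ((2/3) powr \<alpha> * ?n powr \<alpha>) + c * ?n powr \<alpha>"
        using npow[OF sp(5)] Dpos c by (intro add_right_mono mult_left_mono) auto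
      also have "\<dots> = (D * (2/3) powr \<alpha> + c) * ?n powr \<alpha>" by (simp add: algebra_simps)
      finally show ?thesis using DD by simp
    next
      assume vB: "v \<in> B"
      have slBA: "set ?l = B \<union> A \<union> S" using slAB by auto
      have sub: "SSp (edges G) ?l v \<subseteq> SSp {e \<in> edges G. e \<subseteq> B} lb v \<union> S"
      proof -
        have noe: "\<forall>a\<in>B. \<forall>b\<in>A. {a, b} \<notin> edges G" 
        proof (intro ballI)
          fix a b assume "a \<in> B" "b \<in> A"
          then have "{b, a} \<notin> edges G" using sp(4) by blast
          then show "{a, b} \<notin> edges G" by (simp add: insert_commute)
        qed
        have top': "\<forall>s\<in>S. \<forall>u\<in>B \<union> A. rk ?l u < rk ?l s" using top by blast
        have dj: "B \<inter> A = {}" using sp(2) by auto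
        have cmp: "\<forall>u\<in>B. \<forall>w\<in>B. rk ?l u < rk ?l w \<longleftrightarrow> rk lb u < rk lb w" 
        proof (intro ballI)
          fix u w assume "u \<in> B" "w \<in> B"
          then show "rk ?l u < rk ?l w \<longleftrightarrow> rk lb u < rk lb w" using rkB[of u] rkB[of w] by linarith
        qed
        show ?thesis by (rule SSp_part[OF dl(1) slBA dj djAS(2,1) noe top' _ _ cmp vB]) (use sets in auto)
      qed
      have fin1: "finite (SSp {e \<in> edges G. e \<subseteq> B} lb v)"
        using SSp_fin[of "{e \<in> edges G. e \<subseteq> B}" lb v] by (rule finite_subset) simp
      have c1: "card (SSp (edges G) ?l v) \<le> card (SSp {e \<in> edges G. e \<subseteq> B} lb v \<union> S)"
        by (rule card_mono[OF _ sub]) (use fin1 finS in simp)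
      have c2: "card (SSp {e \<in> edges G. e \<subseteq> B} lb v \<union> S) \<le> card (SSp {e \<in> edges G. e \<subseteq> B} lb v) + card S"
        by (rule card_Un_le)
      have c3: "real (card (SSp (edges G) ?l v)) \<le> real (card (SSp {e \<in> edges G. e \<subseteq> B} lb v)) + real (card S)"
        using le_trans[OF c1 c2] by (metis of_nat_add of_nat_le_iff)
      have c4: "real (card (SSp {e \<in> edges G. e \<subseteq> B} lb v)) \<le> D * real (card B) powr \<alpha>" using IHB vB by blast
      have "real (card (SSp (edges G) ?l v)) \<le> D * real (card B) powr \<alpha> + c * ?n powr \<alpha>"
        using c3 c4 Sc by linarith
      also have "\<dots> \<le> D * ((2/3) powr \<alpha> * ?n powr \<alpha>) + c * ?n powr \<alpha>"
        using npow[OF sp(6)] Dpos c by (intro add_right_mono mult_left_mono) auto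
      also have "\<dots> = (D * (2/3) powr \<alpha> + c) * ?n powr \<alpha>" by (simp add: algebra_simps)
      finally show ?thesis using DD by simp
    next
      assume vS: "v \<in> S"
      have sub: "SSp (edges G) ?l v \<subseteq> S"
      proof
        fix w assume "w \<in> SSp (edges G) ?l v"
        then have "w = v \<or> (w \<in> set ?l \<and> rk ?l v < rk ?l w)" unfolding SSp_def by auto
        then show "w \<in> S"
        proof
          assume "w \<in> set ?l \<and> rk ?l v < rk ?l w"
          show "w \<in> S"
          proof (rule ccontr)
            assume "w \<notin> S"
            then have "w \<in> A \<union> B" using \<open>w \<in> set ?l \<and> rk ?l v < rk ?l w\<close> slAB by auto
            then have "rk ?l w < rk ?l v" using top vS by blast
            then show False using \<open>w \<in> set ?l \<and> rk ?l v < rk ?l w\<close> by linarith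
          qed
        qed (use vS in auto)
      qed
      have "real (card (SSp (edges G) ?l v)) \<le> real (card S)" using card_mono[OF finS sub] by simp
      also have "\<dots> \<le> c * ?n powr \<alpha>" by (rule Sc)
      also have "\<dots> \<le> D * ?n powr \<alpha>" using Dpos npos by (intro mult_right_mono) auto
      finally show ?thesis .
    qed
  qed
qed

definition RR :: "'a set set \<Rightarrow> 'a set \<Rightarrow> ('a \<times> 'a) set" where
  "RR E L = {(a,b). {a,b} \<in> E \<and> a \<in> L \<and> b \<in> L}"
definition cmp :: "'a set set \<Rightarrow> 'a set \<Rightarrow> 'a \<Rightarrow> 'a set" where
  "cmp E L x = {y. (x,y) \<in> (RR E L)\<^sup>*}"

lemma RR_sym: "(a,b) \<in> RR E L \<Longrightarrow> (b,a) \<in> RR E L"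
proof -
  assume "(a,b) \<in> RR E L"
  then have "{a,b} \<in> E" "a \<in> L" "b \<in> L" unfolding RR_def by auto
  moreover have "{b,a} = {a,b}" by (rule insert_commute)
  ultimately show ?thesis unfolding RR_def by auto
qed

lemma RR_sym_rt: "(a,b) \<in> (RR E L)\<^sup>* \<Longrightarrow> (b,a) \<in> (RR E L)\<^sup>*"
proof (induction rule: rtrancl_induct)
  case base then show ?case by simp
next
  case (step y z)
  then have "(z,y) \<in> RR E L" using RR_sym by metis
  then show ?case using step(3) by (meson converse_rtrancl_into_rtrancl)
qed

lemma RR_in: "(a,b) \<in> (RR E L)\<^sup>* \<Longrightarrow> a \<in> L \<Longrightarrow> b \<in> L"
  by (induction rule: rtrancl_induct) (auto simp: RR_def)

lemma RR_mono: "L \<subseteq> L' \<Longrightarrow> (a,b) \<in> (RR E L)\<^sup>* \<Longrightarrow> (a,b) \<in> (RR E L')\<^sup>*"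
proof -
  assume "L \<subseteq> L'" "(a,b) \<in> (RR E L)\<^sup>*"
  moreover have "RR E L \<subseteq> RR E L'" using \<open>L \<subseteq> L'\<close> unfolding RR_def by auto
  ultimately show ?thesis using rtrancl_mono by blast
qed

lemma RR_ipath: "(a,b) \<in> (RR E L)\<^sup>* \<Longrightarrow> {b,w} \<in> E \<Longrightarrow> ipath E L a w"
proof (induction rule: converse_rtrancl_induct)
  case base then show ?case by (rule ip_edge)
next
  case (step y z)
  then have "{y,z} \<in> E" "z \<in> L" unfolding RR_def by auto
  then show ?case using step(3,4) ip_step by metis
qed

lemma cmp_eq: "y \<in> cmp E L x \<Longrightarrow> cmp E L y = cmp E L x"
proof -
  assume "y \<in> cmp E L x"
  then have xy: "(x,y) \<in> (RR E L)\<^sup>*" unfolding cmp_def by simp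
  then have yx: "(y,x) \<in> (RR E L)\<^sup>*" by (rule RR_sym_rt)
  show ?thesis
  proof
    show "cmp E L y \<subseteq> cmp E L x" unfolding cmp_def using xy rtrancl_trans[of x y] by auto
    show "cmp E L x \<subseteq> cmp E L y" unfolding cmp_def using yx rtrancl_trans[of y x] by auto
  qed
qed

lemma group_lemma:
  fixes n :: nat and E :: "'a set set" and cm :: "'a \<Rightarrow> 'a set"
  assumes "finite Y" "finite Rs"
    and "\<forall>y\<in>Y. y \<in> cm y \<and> cm y \<subseteq> Y"
    and "\<forall>y\<in>Y. \<forall>y'\<in>cm y. cm y' = cm y"
    and "\<forall>y\<in>Y. \<forall>a\<in>cm y. \<forall>b\<in>(Y \<union> Rs) - cm y. {a,b} \<notin> E \<and> {b,a} \<notin> E"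
    and "\<forall>y\<in>Y. 3 * card (cm y) \<le> n"
    and "3 * card Rs \<le> 2 * n" "Rs \<inter> Y = {}" "card Rs + card Y \<le> n"
  shows "\<exists>A B. A \<inter> B = {} \<and> A \<union> B = Rs \<union> Y \<and> (\<forall>a\<in>A. \<forall>b\<in>B. {a,b} \<notin> E \<and> {b,a} \<notin> E)
      \<and> 3 * card A \<le> 2 * n \<and> 3 * card B \<le> 2 * n"
  using assms
proof (induction "card Y" arbitrary: Y rule: less_induct)
  case less
  show ?case
  proof (cases "Y = {}")
    case True
    then show ?thesis using less.prems(7) by (intro exI[of _ Rs] exI[of _ "{}"]) simp
  next
    case False
    then obtain y where y: "y \<in> Y" by blast
    let ?p = "cm y"
    let ?Y = "Y - ?p"
    have py: "y \<in> ?p" "?p \<subseteq> Y" using less.prems(3) y by auto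
    have finp: "finite ?p" using py less.prems(1) finite_subset by blast
    have "?Y \<subset> Y" using py by blast
    then have lt: "card ?Y < card Y" by (rule psubset_card_mono[OF less.prems(1)])
    have disj: "\<forall>y'\<in>?Y. cm y' \<inter> ?p = {}"
    proof
      fix y' assume y': "y' \<in> ?Y"
      show "cm y' \<inter> ?p = {}"
      proof (rule ccontr)
        assume "cm y' \<inter> ?p \<noteq> {}"
        then obtain z where z: "z \<in> cm y'" "z \<in> ?p" by blast
        have y'Y: "y' \<in> Y" using y' by blast
        have "cm z = cm y'" using less.prems(4) y'Y z(1) by blast
        moreover have "cm z = cm y" using less.prems(4) y z(2) by blast
        moreover have "y' \<in> cm y'" using less.prems(3) y'Y by blast
        ultimately have "y' \<in> ?p" by simp
        then show False using y' by auto
      qed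
    qed
    have h3: "\<forall>y\<in>?Y. y \<in> cm y \<and> cm y \<subseteq> ?Y" using less.prems(3) disj by blast
    have h4: "\<forall>y\<in>?Y. \<forall>y'\<in>cm y. cm y' = cm y" using less.prems(4) by blast
    have h5: "\<forall>y\<in>?Y. \<forall>a\<in>cm y. \<forall>b\<in>(?Y \<union> Rs) - cm y. {a,b} \<notin> E \<and> {b,a} \<notin> E" using less.prems(5) by blast
    have h6: "\<forall>y\<in>?Y. 3 * card (cm y) \<le> n" using less.prems(6) by blast
    have h8: "Rs \<inter> ?Y = {}" using less.prems(8) by auto
    have cY: "card ?Y + card ?p = card Y"
    proof -
      have "card ?Y = card Y - card ?p" by (rule card_Diff_subset[OF finp py(2)])
      moreover have "card ?p \<le> card Y" by (rule card_mono[OF less.prems(1) py(2)])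
      ultimately show ?thesis by simp
    qed
    have h9: "card Rs + card ?Y \<le> n" using less.prems(9) cY by linarith
    have fY: "finite ?Y" using less.prems(1) by simp
    obtain A B where AB: "A \<inter> B = {}" "A \<union> B = Rs \<union> ?Y" "\<forall>a\<in>A. \<forall>b\<in>B. {a,b} \<notin> E \<and> {b,a} \<notin> E"
      "3 * card A \<le> 2 * n" "3 * card B \<le> 2 * n"
      using less.hyps[OF lt fY less.prems(2) h3 h4 h5 h6 less.prems(7) h8 h9] by blast
    have finRY: "finite (Rs \<union> ?Y)" using less.prems(1,2) by simp
    have AsB: "A \<subseteq> Rs \<union> ?Y" "B \<subseteq> Rs \<union> ?Y" using AB(2) by blast+
    have finAB: "finite A" "finite B" using finite_subset[OF AsB(1) finRY] finite_subset[OF AsB(2) finRY] by auto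
    have pAB: "A \<inter> ?p = {}" "B \<inter> ?p = {}" using AsB py(2) less.prems(8) by blast+
    have noe: "\<forall>a\<in>?p. \<forall>b\<in>A \<union> B. {a,b} \<notin> E \<and> {b,a} \<notin> E"
    proof (intro ballI)
      fix a b assume "a \<in> ?p" "b \<in> A \<union> B"
      then have "b \<in> (Y \<union> Rs) - ?p" using AsB py(2) less.prems(8) by blast
      then show "{a,b} \<notin> E \<and> {b,a} \<notin> E" using less.prems(5) y \<open>a \<in> ?p\<close> by blast
    qed
    have cAB: "card A + card B = card Rs + card ?Y"
    proof -
      have "card (A \<union> B) = card A + card B" by (rule card_Un_disjoint[OF finAB AB(1)])
      moreover have "card (Rs \<union> ?Y) = card Rs + card ?Y" by (rule card_Un_disjoint) (use less.prems(1,2) h8 in auto)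
      ultimately show ?thesis using AB(2) by simp
    qed
    show ?thesis
    proof (cases "3 * (card A + card ?p) \<le> 2 * n")
      case True
      have "card (A \<union> ?p) = card A + card ?p" using pAB finAB finp by (simp add: card_Un_disjoint)
      moreover have "(A \<union> ?p) \<inter> B = {}" "(A \<union> ?p) \<union> B = Rs \<union> Y" using AB pAB py by auto
      moreover have "\<forall>a\<in>A \<union> ?p. \<forall>b\<in>B. {a,b} \<notin> E \<and> {b,a} \<notin> E" using AB(3) noe by blast
      ultimately show ?thesis using True AB(5) by (intro exI[of _ "A \<union> ?p"] exI[of _ B]) auto
    next
      case False
      have cB: "card (B \<union> ?p) = card B + card ?p" using pAB finAB finp by (simp add: card_Un_disjoint)
      have "3 * card ?p \<le> n" using less.prems(6) y by blast
      then have "3 * card (B \<union> ?p) \<le> 2 * n" using False cB cAB cY less.prems(9) unfolding distrib_left by linarith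
      moreover have "A \<inter> (B \<union> ?p) = {}" "A \<union> (B \<union> ?p) = Rs \<union> Y" using AB pAB py by auto
      moreover have "\<forall>a\<in>A. \<forall>b\<in>B \<union> ?p. {a,b} \<notin> E \<and> {b,a} \<notin> E" using AB(3) noe by blast
      ultimately show ?thesis using AB(4) by (intro exI[of _ A] exI[of _ "B \<union> ?p"]) auto
    qed
  qed
qed

context ord_graph begin

lemma take_nth_notin: "i < length \<pi> \<Longrightarrow> \<pi> ! i \<notin> set (take i \<pi>)"
  using set_take_rk[OF dist, of i] rk_nth[OF dist] by auto

lemma lower_struct:
  assumes conn: "connected_graph G" and ne: "V \<noteq> {}"
  shows "\<exists>D N u. D \<subseteq> V \<and> N \<subseteq> V \<and> card V \<le> 3 * card D \<and> balanced_separator G (insert u N) \<and>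
     (\<forall>v\<in>D. N \<subseteq> ss_verts G \<pi> v \<and> {(a,b). a \<in> N \<and> b \<in> N \<and> r a < r b} \<subseteq> ss_arcs G \<pi> v)"
proof -
  let ?n = "card V"
  have finV: "finite V" using wf unfolding wf_graph_def by auto
  define L where "L k = set (take k \<pi>)" for k
  define big where "big k \<longleftrightarrow> (\<exists>y\<in>L k. ?n \<le> 3 * card (cmp E (L k) y))" for k
  have LV: "L k \<subseteq> V" for k unfolding L_def setpi[symmetric] by (rule set_take_subset)
  have cmp_sub: "cmp E (L k) y \<subseteq> L k" if "y \<in> L k" for k y
  proof
    fix z assume "z \<in> cmp E (L k) y"
    then have "(y,z) \<in> (RR E (L k))\<^sup>*" unfolding cmp_def by simp
    then show "z \<in> L k" using that by (rule RR_in)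
  qed
  have bigN: "big (length \<pi>)"
  proof -
    obtain y where y: "y \<in> V" using ne by blast
    have Ln: "L (length \<pi>) = V" unfolding L_def using setpi by simp
    have "{(a,b). {a,b} \<in> E} \<subseteq> RR E V" unfolding RR_def using wf_edge[OF wf] by auto
    then have sub: "{(a,b). {a,b} \<in> E}\<^sup>* \<subseteq> (RR E V)\<^sup>*" by (rule rtrancl_mono)
    have "V \<subseteq> cmp E V y"
    proof
      fix z assume "z \<in> V"
      then have "(y,z) \<in> {(a,b). {a,b} \<in> E}\<^sup>*" using conn y unfolding connected_graph_def by blast
      then show "z \<in> cmp E V y" unfolding cmp_def using sub by blast
    qed
    moreover have "cmp E V y \<subseteq> V" using cmp_sub[of y "length \<pi>"] Ln y by simp
    ultimately have "cmp E V y = V" by blast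
    then have "card V \<le> 3 * card (cmp E (L (length \<pi>)) y)" using Ln by simp
    then show ?thesis unfolding big_def using Ln y by blast
  qed
  define t where "t = (LEAST k. big k)"
  have bt: "big t" unfolding t_def using bigN by (rule LeastI)
  have tle: "t \<le> length \<pi>" unfolding t_def using bigN by (rule Least_le)
  have "\<not> big 0" unfolding big_def L_def by simp
  then have t0: "t \<noteq> 0" using bt by (metis)
  have "t - 1 < t" using t0 by simp
  then have nb: "\<not> big (t - 1)" unfolding t_def by (rule not_less_Least)
  obtain x where x: "x \<in> L t" "?n \<le> 3 * card (cmp E (L t) x)" using bt unfolding big_def by blast
  define D where "D = cmp E (L t) x"
  define u where "u = \<pi> ! (t - 1)"
  have tl: "t - 1 < length \<pi>" using tle t0 by linarith
  have Lt: "L t = insert u (L (t - 1))"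
  proof -
    have "take t \<pi> = take (t - 1) \<pi> @ [\<pi> ! (t - 1)]" using take_Suc_conv_app_nth[OF tl] t0 by simp
    then show ?thesis unfolding L_def u_def by simp
  qed
  have uL: "u \<notin> L (t - 1)" unfolding u_def L_def using take_nth_notin[OF tl] .
  have uV: "u \<in> V" unfolding u_def setpi[symmetric] using tl by simp
  have DL: "D \<subseteq> L t" unfolding D_def using cmp_sub x(1) by blast
  have DV: "D \<subseteq> V" using DL LV by blast
  have xD: "(x,d) \<in> (RR E (L t))\<^sup>*" if "d \<in> D" for d using that unfolding D_def cmp_def by blast
  have Dpath: "(v,d) \<in> (RR E (L t))\<^sup>*" if "v \<in> D" "d \<in> D" for v d
    using RR_sym_rt[OF xD[OF that(1)]] xD[OF that(2)] by (rule rtrancl_trans)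
  define N where "N = {w \<in> V - D. \<exists>d\<in>D. {d,w} \<in> E}"
  have NV: "N \<subseteq> V" unfolding N_def by blast
  have NL: "w \<notin> L t" if wN: "w \<in> N" for w
  proof
    assume wL: "w \<in> L t"
    obtain d where d: "d \<in> D" "{d,w} \<in> E" "w \<notin> D" using wN unfolding N_def by blast
    have "(d,w) \<in> RR E (L t)" unfolding RR_def using d DL wL by auto
    then have "(x,w) \<in> (RR E (L t))\<^sup>*" using xD[OF d(1)] by simp
    then show False using d(3) unfolding D_def cmp_def by simp
  qed
  let ?S = "insert u N"
  let ?Y = "D - {u}"
  let ?R = "V - D - ?S"
  let ?cm = "cmp E (L (t - 1))"
  have LL: "L (t - 1) \<subseteq> L t" using Lt by blast
  have YL: "y \<in> L (t - 1)" if "y \<in> ?Y" for y using that DL Lt by blast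
  have g3: "\<forall>y\<in>?Y. y \<in> ?cm y \<and> ?cm y \<subseteq> ?Y"
  proof
    fix y assume y: "y \<in> ?Y"
    have "y \<in> ?cm y" unfolding cmp_def by simp
    moreover have "?cm y \<subseteq> ?Y"
    proof
      fix z assume "z \<in> ?cm y"
      then have yz: "(y,z) \<in> (RR E (L (t - 1)))\<^sup>*" unfolding cmp_def by simp
      have zL: "z \<in> L (t - 1)" using yz YL[OF y] by (rule RR_in)
      have zu: "z \<noteq> u" using uL zL by blast
      have yz2: "(y,z) \<in> (RR E (L t))\<^sup>*" using RR_mono[OF LL yz] .
      have xy: "(x,y) \<in> (RR E (L t))\<^sup>*" using xD[of y] y by blast
      have "(x,z) \<in> (RR E (L t))\<^sup>*" using xy yz2 by (rule rtrancl_trans)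
      then have "z \<in> D" unfolding D_def cmp_def by simp
      then show "z \<in> ?Y" using zu by blast
    qed
    ultimately show "y \<in> ?cm y \<and> ?cm y \<subseteq> ?Y" by blast
  qed
  have g4: "\<forall>y\<in>?Y. \<forall>y'\<in>?cm y. ?cm y' = ?cm y"
  proof (intro ballI)
    fix y y' assume "y' \<in> ?cm y"
    then show "?cm y' = ?cm y" by (rule cmp_eq)
  qed
  have g5: "\<forall>y\<in>?Y. \<forall>a\<in>?cm y. \<forall>b\<in>(?Y \<union> ?R) - ?cm y. {a,b} \<notin> E \<and> {b,a} \<notin> E"
  proof (intro ballI)
    fix y a b assume y: "y \<in> ?Y" and a: "a \<in> ?cm y" and b: "b \<in> (?Y \<union> ?R) - ?cm y"
    have aY: "a \<in> ?Y" using g3 y a by blast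
    have aL: "a \<in> L (t - 1)" using YL[OF aY] .
    have "{a,b} \<notin> E"
    proof
      assume ab: "{a,b} \<in> E"
      show False
      proof (cases "b \<in> ?Y")
        case True
        then have "(a,b) \<in> RR E (L (t - 1))" unfolding RR_def using ab aL YL by blast
        moreover have "(y,a) \<in> (RR E (L (t - 1)))\<^sup>*" using a unfolding cmp_def by simp
        ultimately have "b \<in> ?cm y" unfolding cmp_def by simp
        then show False using b by blast
      next
        case False
        then have "b \<in> V - D" "b \<notin> N" using b by auto
        moreover have "a \<in> D" using aY by blast
        ultimately show False using ab unfolding N_def by blast
      qed
    qed
    moreover have "{b,a} = {a,b}" by (rule insert_commute)
    ultimately show "{a,b} \<notin> E \<and> {b,a} \<notin> E" by simp
  qed
  have g6: "\<forall>y\<in>?Y. 3 * card (?cm y) \<le> ?n"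
  proof
    fix y assume "y \<in> ?Y"
    then have "y \<in> L (t - 1)" by (rule YL)
    then have "\<not> ?n \<le> 3 * card (?cm y)" using nb unfolding big_def by blast
    then show "3 * card (?cm y) \<le> ?n" by linarith
  qed
  have finD: "finite D" using DV finV finite_subset by blast
  have cVD: "card (V - D) = ?n - card D" using card_Diff_subset[OF finD DV] .
  have g7: "3 * card ?R \<le> 2 * ?n"
  proof -
    have "card ?R \<le> card (V - D)" by (rule card_mono) (use finV in auto)
    then show ?thesis using cVD x(2) unfolding D_def by linarith
  qed
  have g8: "?R \<inter> ?Y = {}" by blast
  have g9: "card ?R + card ?Y \<le> ?n"
  proof -
    have "card ?R + card ?Y = card (?R \<union> ?Y)" by (rule card_Un_disjoint[symmetric]) (use finV finD in auto)
    also have "\<dots> \<le> ?n" by (rule card_mono) (use finV DV in auto)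
    finally show ?thesis .
  qed
  have finY: "finite ?Y" using finD by simp
  have finR: "finite ?R" using finV by simp
  obtain A B where AB: "A \<inter> B = {}" "A \<union> B = ?R \<union> ?Y" "\<forall>a\<in>A. \<forall>b\<in>B. {a,b} \<notin> E \<and> {b,a} \<notin> E"
      "3 * card A \<le> 2 * ?n" "3 * card B \<le> 2 * ?n"
    using group_lemma[OF finY finR g3 g4 g5 g6 g7 g8 g9] by blast
  have DN: "D \<inter> N = {}" unfolding N_def by blast
  have sp: "sep_parts G ?S A B"
    unfolding sep_parts_def
  proof (intro conjI)
    show "?S \<subseteq> V" using uV NV by blast
    show "A \<inter> B = {}" by (rule AB(1))
    show "A \<union> B = V - ?S" using AB(2) DV DN by blast
    show "\<forall>a\<in>A. \<forall>b\<in>B. {a, b} \<notin> E" using AB(3) by blast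
    show "real (card A) \<le> 2 * real ?n / 3" using AB(4) by linarith
    show "real (card B) \<le> 2 * real ?n / 3" using AB(5) by linarith
  qed
  then have bs: "balanced_separator G ?S" unfolding balanced_separator_def by blast
  have Llow: "L t \<subseteq> low \<pi> w" "rk \<pi> z < rk \<pi> w" if "w \<in> V" "w \<notin> L t" "z \<in> L t" for w z
  proof -
    have "\<not> rk \<pi> w < t" using that(1,2) setpi set_take_rk[OF dist, of t] unfolding L_def by blast
    moreover have zr: "\<forall>z\<in>L t. z \<in> set \<pi> \<and> rk \<pi> z < t" using set_take_rk[OF dist, of t] unfolding L_def by blast
    ultimately show "L t \<subseteq> low \<pi> w" "rk \<pi> z < rk \<pi> w" unfolding low_def using that(3) by auto
  qed
  have reachN: "(v,w) \<in> (up_arcs G \<pi>)\<^sup>*" if v: "v \<in> D" and w: "w \<in> N" for v w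
  proof -
    obtain d where d: "d \<in> D" "{d,w} \<in> E" using w unfolding N_def by blast
    have "ipath E (L t) v w" using RR_ipath[OF Dpath[OF v d(1)] d(2)] .
    moreover have wV: "w \<in> V" "w \<notin> L t" using w NV NL by auto
    moreover have vL: "v \<in> L t" using v DL by blast
    ultimately have "ipath E (low \<pi> w) v w" "rk \<pi> v < rk \<pi> w" using Llow[of w v] ipath_mono by metis+
    moreover have "v \<in> set \<pi>" "w \<in> set \<pi>" using vL LV wV setpi by auto
    ultimately show ?thesis using ipath_reach by blast
  qed
  have arcN: "(a,b) \<in> up_arcs G \<pi>" if a: "a \<in> N" and b: "b \<in> N" and ab: "rk \<pi> a < rk \<pi> b" for a b
  proof -
    obtain da where da: "da \<in> D" "{da,a} \<in> E" using a unfolding N_def by blast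
    obtain db where db: "db \<in> D" "{db,b} \<in> E" using b unfolding N_def by blast
    have i1: "ipath E (L t) da b" using RR_ipath[OF Dpath[OF da(1) db(1)] db(2)] .
    have "{a,da} \<in> E" using da(2) by (simp add: insert_commute)
    moreover have "da \<in> L t" using da DL by blast
    ultimately have iab: "ipath E (L t) a b" using i1 ip_step by metis
    have abV: "a \<in> V - L t" "b \<in> V - L t" using a b NV NL by auto
    have "a \<noteq> b" using ab by auto
    then have "{a,b} \<in> fillE V E (L t)" unfolding fillE_def using abV iab by blast
    moreover have "t < length \<pi>"
    proof (rule ccontr)
      assume "\<not> t < length \<pi>"
      then have "L t = V" unfolding L_def using setpi by simp
      then show False using abV by blast
    qed
    ultimately have "{a,b} \<in> star_edges G \<pi>" using star_mem unfolding L_def by blast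
    then show ?thesis using up_arc_char abV setpi ab by auto
  qed
  have "\<forall>v\<in>D. N \<subseteq> ss_verts G \<pi> v \<and> {(a,b). a \<in> N \<and> b \<in> N \<and> r a < r b} \<subseteq> ss_arcs G \<pi> v"
  proof
    fix v assume v: "v \<in> D"
    have "N \<subseteq> ss_verts G \<pi> v" unfolding ss_verts_def using reachN[OF v] by blast
    moreover have "{(a,b). a \<in> N \<and> b \<in> N \<and> r a < r b} \<subseteq> ss_arcs G \<pi> v"
      unfolding ss_arcs_def using arcN \<open>N \<subseteq> ss_verts G \<pi> v\<close> by blast
    ultimately show "N \<subseteq> ss_verts G \<pi> v \<and> {(a,b). a \<in> N \<and> b \<in> N \<and> r a < r b} \<subseteq> ss_arcs G \<pi> v" by blast
  qed
  then show ?thesis using DV NV x(2) bs unfolding D_def by blast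
qed

end

lemma count_pairs:
  assumes fin: "finite N" and inj: "\<forall>a\<in>N. \<forall>b\<in>N. f a = f b \<longrightarrow> a = b"
  shows "2 * card {(a,b). a \<in> N \<and> b \<in> N \<and> (f a::nat) < f b} + card N = card N * card N"
proof -
  let ?P = "{(a,b). a \<in> N \<and> b \<in> N \<and> f a < f b}"
  let ?Q = "{(a,b). a \<in> N \<and> b \<in> N \<and> f b < f a}"
  let ?D = "(\<lambda>a. (a,a)) ` N"
  have NN: "N \<times> N = ?P \<union> ?Q \<union> ?D"
  proof
    show "N \<times> N \<subseteq> ?P \<union> ?Q \<union> ?D"
    proof
      fix p assume "p \<in> N \<times> N"
      then obtain a b where p: "p = (a,b)" "a \<in> N" "b \<in> N" by blast
      show "p \<in> ?P \<union> ?Q \<union> ?D"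
      proof (cases "f a < f b")
        case True then show ?thesis using p by blast
      next
        case False
        show ?thesis
        proof (cases "f b < f a")
          case True then show ?thesis using p by blast
        next
          case False
          then have "f a = f b" using \<open>\<not> f a < f b\<close> by linarith
          then have "a = b" using inj p by blast
          then show ?thesis using p by blast
        qed
      qed
    qed
  qed auto
  have finNN: "finite (N \<times> N)" using fin by simp
  have sP: "?P \<subseteq> N \<times> N" "?Q \<subseteq> N \<times> N" by auto
  have finP: "finite ?P" "finite ?Q" "finite ?D" using finite_subset[OF sP(1) finNN] finite_subset[OF sP(2) finNN] fin by auto
  have d1: "(?P \<union> ?Q) \<inter> ?D = {}" by auto
  have d2: "?P \<inter> ?Q = {}" by auto
  have c1: "card (N \<times> N) = card (?P \<union> ?Q) + card ?D"
    unfolding NN using finP d1 by (simp add: card_Un_disjoint)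
  have c2: "card (?P \<union> ?Q) = card ?P + card ?Q"
    using finP d2 by (simp add: card_Un_disjoint)
  have c3: "card ?Q = card ?P"
  proof -
    have "?Q = (\<lambda>(a,b). (b,a)) ` ?P"
    proof
      show "?Q \<subseteq> (\<lambda>(a,b). (b,a)) ` ?P"
      proof
        fix p assume "p \<in> ?Q"
        then obtain a b where ab: "p = (a,b)" "a \<in> N" "b \<in> N" "f b < f a" by blast
        then have "(b,a) \<in> ?P" by blast
        moreover have "p = (\<lambda>(a,b). (b,a)) (b,a)" using ab by simp
        ultimately show "p \<in> (\<lambda>(a,b). (b,a)) ` ?P" by (rule rev_image_eqI)
      qed
      show "(\<lambda>(a,b). (b,a)) ` ?P \<subseteq> ?Q" by auto
    qed
    moreover have "inj_on (\<lambda>(a,b). (b,a)) ?P" unfolding inj_on_def by auto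
    ultimately show ?thesis by (simp add: card_image)
  qed
  have c4: "card ?D = card N" by (rule card_image) (simp add: inj_on_def)
  have c5: "card (N \<times> N) = card N * card N" by (rule card_cartesian_product)
  show ?thesis using c1 c2 c3 c4 c5 by linarith
qed

lemma avg_le_max:
  fixes f :: "'a \<Rightarrow> nat"
  assumes "finite V" "V \<noteq> {}"
  shows "(\<Sum>v\<in>V. real (f v)) / real (card V) \<le> real (Max (f ` V))"
proof -
  have "(\<Sum>v\<in>V. real (f v)) \<le> (\<Sum>v\<in>V. real (Max (f ` V)))"
    by (rule sum_mono) (use assms in auto)
  also have "\<dots> = real (card V) * real (Max (f ` V))" by simp
  finally have h: "(\<Sum>v\<in>V. real (f v)) \<le> real (card V) * real (Max (f ` V))" .
  have "real (card V) > 0" using assms by (simp add: card_gt_0_iff)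
  then show ?thesis using h by (simp add: divide_le_eq mult.commute)
qed

lemma sum_ge_part:
  fixes f :: "'a \<Rightarrow> nat" and k :: real
  assumes "finite V" "D \<subseteq> V" "\<forall>v\<in>D. k \<le> real (f v)"
  shows "real (card D) * k \<le> (\<Sum>v\<in>V. real (f v))"
proof -
  have "real (card D) * k = (\<Sum>v\<in>D. k)" by simp
  also have "\<dots> \<le> (\<Sum>v\<in>D. real (f v))" by (rule sum_mono) (use assms in auto)
  also have "\<dots> \<le> (\<Sum>v\<in>V. real (f v))" by (rule sum_mono2) (use assms in auto)
  finally show ?thesis .
qed

context ord_graph begin

lemma ss_fin: "finite (ss_verts G \<pi> v)"
proof -
  have "ss_verts G \<pi> v \<subseteq> SSp E \<pi> v" by (rule ss_sub_SSp)
  moreover have "SSp E \<pi> v \<subseteq> insert v (set \<pi>)" unfolding SSp_def by blast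
  then have "finite (SSp E \<pi> v)" by (rule finite_subset) simp
  ultimately show ?thesis by (rule finite_subset)
qed

lemma ss_arcs_sub: "ss_arcs G \<pi> v \<subseteq> ss_verts G \<pi> v \<times> ss_verts G \<pi> v"
  unfolding ss_arcs_def by auto

lemma ss_arcs_card: "card (ss_arcs G \<pi> v) \<le> card (ss_verts G \<pi> v) * card (ss_verts G \<pi> v)"
proof -
  have "card (ss_arcs G \<pi> v) \<le> card (ss_verts G \<pi> v \<times> ss_verts G \<pi> v)"
    by (rule card_mono) (use ss_fin ss_arcs_sub in auto)
  then show ?thesis by (simp add: card_cartesian_product)
qed

end

lemma max_le_bound:
  fixes f :: "'a \<Rightarrow> nat"
  assumes "finite V" "V \<noteq> {}" "\<forall>v\<in>V. real (f v) \<le> b"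
  shows "real (Max (f ` V)) \<le> b"
proof -
  have "Max (f ` V) \<in> f ` V" using assms by simp
  then obtain v where "v \<in> V" "Max (f ` V) = f v" by auto
  then show ?thesis using assms(3) by simp
qed

lemma main_core:
  fixes \<alpha> c c' :: real and K :: "'a ugraph set" and G :: "'a ugraph"
  assumes al: "0 < \<alpha>" "\<alpha> < 1" and c: "c > 0" and c': "c' > 0"
    and K: "subgraph_closed K"
    and sepK: "\<forall>H\<in>K. \<exists>S. balanced_separator H S \<and> real (card S) \<le> c * real (card (verts H)) powr \<alpha>"
    and GK: "G \<in> K" and conn: "connected_graph G"
    and nG: "nat \<lceil>(4 / c') powr (1 / \<alpha>)\<rceil> + 1 \<le> card (verts G)"
    and lowsep: "\<forall>S. balanced_separator G S \<longrightarrow> real (card S) \<ge> c' * real (card (verts G)) powr \<alpha>"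
    and nd: "nd_order G \<pi>nd" and vo: "vertex_order G \<pi>"
  shows "max_ss_verts G \<pi>nd \<le> max ((c / (1 - (2/3) powr \<alpha>)) / (c' / 6)) ((c / (1 - (2/3) powr \<alpha>))^2 / (c'^2 / 24)) * max_ss_verts G \<pi> \<and>
         max_ss_arcs G \<pi>nd \<le> max ((c / (1 - (2/3) powr \<alpha>)) / (c' / 6)) ((c / (1 - (2/3) powr \<alpha>))^2 / (c'^2 / 24)) * max_ss_arcs G \<pi> \<and>
         avg_ss_verts G \<pi>nd \<le> max ((c / (1 - (2/3) powr \<alpha>)) / (c' / 6)) ((c / (1 - (2/3) powr \<alpha>))^2 / (c'^2 / 24)) * avg_ss_verts G \<pi> \<and>
         avg_ss_arcs G \<pi>nd \<le> max ((c / (1 - (2/3) powr \<alpha>)) / (c' / 6)) ((c / (1 - (2/3) powr \<alpha>))^2 / (c'^2 / 24)) * avg_ss_arcs G \<pi>"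
proof -
  define D0 where "D0 = c / (1 - (2/3) powr \<alpha>)"
  define C where "C = max (D0 / (c' / 6)) (D0^2 / (c'^2 / 24))"
  have q: "(2/3::real) powr \<alpha> < 1" using powr_less_mono2[of \<alpha> "2/3" 1] al by auto
  have D0pos: "D0 > 0" unfolding D0_def using q c by auto
  have wf: "wf_graph G" using K GK unfolding subgraph_closed_def by auto
  let ?V = "verts G"
  let ?n = "card ?V"
  define m where "m = real ?n powr \<alpha>"
  have finV: "finite ?V" using wf unfolding wf_graph_def by auto
  have n1: "?n \<ge> 1" using nG by linarith
  then have Vne: "?V \<noteq> {}" by auto
  have npos: "real ?n > 0" using n1 by simp
  have mpos: "m > 0" unfolding m_def using npos by simp
  have cm: "c' * m \<ge> 4"
  proof -
    have "(4 / c') powr (1 / \<alpha>) \<le> real ?n"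
    proof -
      have "(4 / c') powr (1 / \<alpha>) \<le> real (nat \<lceil>(4 / c') powr (1 / \<alpha>)\<rceil>)" by linarith
      also have "\<dots> \<le> real ?n" using nG by linarith
      finally show ?thesis .
    qed
    then have "((4 / c') powr (1 / \<alpha>)) powr \<alpha> \<le> real ?n powr \<alpha>" using al by (intro powr_mono2) auto
    moreover have "((4 / c') powr (1 / \<alpha>)) powr \<alpha> = 4 / c'" using al c' by (simp add: powr_powr)
    ultimately have "4 / c' \<le> m" unfolding m_def by simp
    then show ?thesis using c' by (simp add: field_simps)
  qed
  have dnd: "distinct \<pi>nd" "set \<pi>nd = ?V" using nd_set[OF nd] by auto
  interpret ND: ord_graph G \<pi>nd using wf dnd by unfold_locales
  have ndb: "\<forall>v\<in>?V. real (card (SSp (edges G) \<pi>nd v)) \<le> D0 * m"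
    using nd_bound[OF K sepK c al(1) D0_def nd GK] unfolding m_def by blast
  have ubv: "real (card (ss_verts G \<pi>nd v)) \<le> D0 * m" if "v \<in> ?V" for v
  proof -
    have "card (ss_verts G \<pi>nd v) \<le> card (SSp (edges G) \<pi>nd v)"
    proof (rule card_mono)
      show "finite (SSp (edges G) \<pi>nd v)" using SSp_fin[of "edges G" \<pi>nd v] by (rule finite_subset) simp
      show "ss_verts G \<pi>nd v \<subseteq> SSp (edges G) \<pi>nd v" by (rule ND.ss_sub_SSp)
    qed
    then show ?thesis using ndb that by (meson of_nat_le_iff order_trans)
  qed
  have uba: "real (card (ss_arcs G \<pi>nd v)) \<le> (D0 * m)^2" if "v \<in> ?V" for v
  proof -
    have "real (card (ss_arcs G \<pi>nd v)) \<le> real (card (ss_verts G \<pi>nd v)) * real (card (ss_verts G \<pi>nd v))"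
      using ND.ss_arcs_card[of v] by (metis of_nat_le_iff of_nat_mult)
    also have "\<dots> \<le> (D0 * m) * (D0 * m)" using ubv[OF that] by (intro mult_mono) auto
    finally show ?thesis by (simp add: power2_eq_square)
  qed
  have maxv_nd: "max_ss_verts G \<pi>nd \<le> D0 * m"
    unfolding max_ss_verts_def by (rule max_le_bound[OF finV Vne]) (use ubv in blast)
  have maxa_nd: "max_ss_arcs G \<pi>nd \<le> (D0 * m)^2"
    unfolding max_ss_arcs_def by (rule max_le_bound[OF finV Vne]) (use uba in blast)
  have avgv_nd: "avg_ss_verts G \<pi>nd \<le> max_ss_verts G \<pi>nd"
    unfolding avg_ss_verts_def max_ss_verts_def by (rule avg_le_max[OF finV Vne])
  have avga_nd: "avg_ss_arcs G \<pi>nd \<le> max_ss_arcs G \<pi>nd"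
    unfolding avg_ss_arcs_def max_ss_arcs_def by (rule avg_le_max[OF finV Vne])
  have dpi: "distinct \<pi>" "set \<pi> = ?V" using vo unfolding vertex_order_def by auto
  interpret PI: ord_graph G \<pi> using wf dpi by unfold_locales
  obtain D N u where DN0: "D \<subseteq> ?V \<and> N \<subseteq> ?V \<and> ?n \<le> 3 * card D \<and> balanced_separator G (insert u N) \<and>
     (\<forall>v\<in>D. N \<subseteq> ss_verts G \<pi> v \<and> {(a,b). a \<in> N \<and> b \<in> N \<and> rk \<pi> a < rk \<pi> b} \<subseteq> ss_arcs G \<pi> v)"
    using PI.lower_struct[OF conn Vne] by blast
  have DN: "D \<subseteq> ?V" "N \<subseteq> ?V" "?n \<le> 3 * card D" "balanced_separator G (insert u N)"
    "\<forall>v\<in>D. N \<subseteq> ss_verts G \<pi> v \<and> {(a,b). a \<in> N \<and> b \<in> N \<and> rk \<pi> a < rk \<pi> b} \<subseteq> ss_arcs G \<pi> v"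
    using DN0 by (rule conjunct1 conjunct2[THEN conjunct1] conjunct2[THEN conjunct2, THEN conjunct1]
        conjunct2[THEN conjunct2, THEN conjunct2, THEN conjunct1] conjunct2[THEN conjunct2, THEN conjunct2, THEN conjunct2])+
  have finN: "finite N" using DN(2) finV finite_subset by blast
  have "c' * m \<le> real (card (insert u N))" using lowsep DN(4) unfolding m_def by blast
  moreover have "card (insert u N) \<le> card N + 1" using finN by (simp add: card_insert_if)
  ultimately have cN: "c' * m - 1 \<le> real (card N)" by linarith
  let ?P = "{(a,b). a \<in> N \<and> b \<in> N \<and> rk \<pi> a < rk \<pi> b}"
  have cP: "2 * card ?P + card N = card N * card N"
  proof (rule count_pairs[OF finN])
    show "\<forall>a\<in>N. \<forall>b\<in>N. rk \<pi> a = rk \<pi> b \<longrightarrow> a = b" using rk_inj[OF dpi(1)] DN(2) dpi(2) by blast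
  qed
  have cPr: "real (card ?P) \<ge> (c' * m)^2 / 8"
  proof -
    let ?x = "real (card N)"
    have "real (2 * card ?P + card N) = real (card N * card N)" using cP by (simp only:)
    then have "2 * real (card ?P) + ?x = ?x * ?x" by simp
    then have "2 * real (card ?P) = ?x * ?x - ?x" by linarith
    also have "\<dots> = ?x * (?x - 1)" by (simp add: algebra_simps)
    also have "\<dots> \<ge> (c' * m / 2) * (c' * m / 2)"
      using cN cm by (intro mult_mono) auto
    finally show ?thesis by (simp add: power2_eq_square)
  qed
  have lbv: "\<forall>v\<in>D. c' * m / 2 \<le> real (card (ss_verts G \<pi> v))"
  proof
    fix v assume "v \<in> D"
    then have "N \<subseteq> ss_verts G \<pi> v" using DN(5) by blast
    then have "card N \<le> card (ss_verts G \<pi> v)" by (rule card_mono[OF PI.ss_fin])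
    then show "c' * m / 2 \<le> real (card (ss_verts G \<pi> v))" using cN cm by linarith
  qed
  have lba: "\<forall>v\<in>D. (c' * m)^2 / 8 \<le> real (card (ss_arcs G \<pi> v))"
  proof
    fix v assume "v \<in> D"
    have "finite (ss_verts G \<pi> v \<times> ss_verts G \<pi> v)" using PI.ss_fin[of v] by simp
    then have fa: "finite (ss_arcs G \<pi> v)" using PI.ss_arcs_sub[of v] by (rule finite_subset[rotated])
    have "?P \<subseteq> ss_arcs G \<pi> v" using DN(5) \<open>v \<in> D\<close> by blast
    then have "card ?P \<le> card (ss_arcs G \<pi> v)" by (rule card_mono[OF fa])
    then show "(c' * m)^2 / 8 \<le> real (card (ss_arcs G \<pi> v))" using cPr by linarith
  qed
  have Dn: "real (card D) \<ge> real ?n / 3" using DN(3) by linarith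
  have avgv_pi: "avg_ss_verts G \<pi> \<ge> c' / 6 * m"
  proof -
    have "real (card D) * (c' * m / 2) \<le> (\<Sum>v\<in>?V. real (card (ss_verts G \<pi> v)))"
      by (rule sum_ge_part[OF finV DN(1) lbv])
    moreover have "real ?n / 3 * (c' * m / 2) \<le> real (card D) * (c' * m / 2)"
      using Dn cm by (intro mult_right_mono) auto
    ultimately have "real ?n * (c' / 6 * m) \<le> (\<Sum>v\<in>?V. real (card (ss_verts G \<pi> v)))" by (simp add: field_simps)
    then show ?thesis unfolding avg_ss_verts_def using npos by (simp add: field_simps)
  qed
  have avga_pi: "avg_ss_arcs G \<pi> \<ge> c'^2 / 24 * m^2"
  proof -
    have "real (card D) * ((c' * m)^2 / 8) \<le> (\<Sum>v\<in>?V. real (card (ss_arcs G \<pi> v)))"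
      by (rule sum_ge_part[OF finV DN(1) lba])
    moreover have "real ?n / 3 * ((c' * m)^2 / 8) \<le> real (card D) * ((c' * m)^2 / 8)"
      using Dn by (intro mult_right_mono) auto
    ultimately have "real ?n * (c'^2 / 24 * m^2) \<le> (\<Sum>v\<in>?V. real (card (ss_arcs G \<pi> v)))"
      by (simp add: field_simps power2_eq_square)
    then show ?thesis unfolding avg_ss_arcs_def using npos by (simp add: field_simps)
  qed
  have avgv_max: "avg_ss_verts G \<pi> \<le> max_ss_verts G \<pi>"
    unfolding avg_ss_verts_def max_ss_verts_def by (rule avg_le_max[OF finV Vne])
  have avga_max: "avg_ss_arcs G \<pi> \<le> max_ss_arcs G \<pi>"
    unfolding avg_ss_arcs_def max_ss_arcs_def by (rule avg_le_max[OF finV Vne])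
  have Cpos: "C \<ge> 0" unfolding C_def using D0pos c' by (simp add: le_max_iff_disj)
  have kv: "D0 * m \<le> C * avg_ss_verts G \<pi>"
  proof -
    have "D0 * m = (D0 / (c' / 6)) * (c' / 6 * m)" using c' by (simp add: field_simps)
    also have "\<dots> \<le> C * (c' / 6 * m)" unfolding C_def using mpos c' by (intro mult_right_mono) auto
    also have "\<dots> \<le> C * avg_ss_verts G \<pi>" using avgv_pi Cpos by (intro mult_left_mono) auto
    finally show ?thesis .
  qed
  have ka: "(D0 * m)^2 \<le> C * avg_ss_arcs G \<pi>"
  proof -
    have "(D0 * m)^2 = (D0^2 / (c'^2 / 24)) * (c'^2 / 24 * m^2)" using c' by (simp add: field_simps power2_eq_square)
    also have "\<dots> \<le> C * (c'^2 / 24 * m^2)" unfolding C_def using mpos c' by (intro mult_right_mono) auto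
    also have "\<dots> \<le> C * avg_ss_arcs G \<pi>" using avga_pi Cpos by (intro mult_left_mono) auto
    finally show ?thesis .
  qed
  have r1: "max_ss_verts G \<pi>nd \<le> C * max_ss_verts G \<pi>"
    using maxv_nd kv mult_left_mono[OF avgv_max Cpos] by linarith
  have r2: "max_ss_arcs G \<pi>nd \<le> C * max_ss_arcs G \<pi>"
    using maxa_nd ka mult_left_mono[OF avga_max Cpos] by linarith
  have r3: "avg_ss_verts G \<pi>nd \<le> C * avg_ss_verts G \<pi>"
    using avgv_nd maxv_nd kv by linarith
  have r4: "avg_ss_arcs G \<pi>nd \<le> C * avg_ss_arcs G \<pi>"
    using avga_nd maxa_nd ka by linarith
  show ?thesis using r1 r2 r3 r4 unfolding C_def D0_def by blast
qed

theorem mainTheorem3: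
  fixes \<alpha> c c' :: real
  assumes "0 < \<alpha>" and "\<alpha> < 1" and "c > 0" and "c' > 0"
  shows "\<exists>(C::real) (n0::nat). \<forall>K :: nat ugraph set.
     subgraph_closed K \<and>
     (\<forall>H\<in>K. \<exists>S. balanced_separator H S \<and> real (card S) \<le> c * real (card (verts H)) powr \<alpha>)
     \<longrightarrow> (\<forall>G\<in>K. connected_graph G \<and> card (verts G) \<ge> n0 \<and>
           (\<forall>S. balanced_separator G S \<longrightarrow> real (card S) \<ge> c' * real (card (verts G)) powr \<alpha>)
           \<longrightarrow> (\<forall>\<pi>nd \<pi>. nd_order G \<pi>nd \<and> vertex_order G \<pi> \<longrightarrow>
                  max_ss_verts G \<pi>nd \<le> C * max_ss_verts G \<pi> \<and>
                  max_ss_arcs G \<pi>nd \<le> C * max_ss_arcs G \<pi> \<and>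
                  avg_ss_verts G \<pi>nd \<le> C * avg_ss_verts G \<pi> \<and>
                  avg_ss_arcs G \<pi>nd \<le> C * avg_ss_arcs G \<pi>))"
  apply (rule exI[of _ "max ((c / (1 - (2/3) powr \<alpha>)) / (c' / 6)) ((c / (1 - (2/3) powr \<alpha>))^2 / (c'^2 / 24))"])
  apply (rule exI[of _ "nat \<lceil>(4 / c') powr (1 / \<alpha>)\<rceil> + 1"])
  apply (intro allI impI ballI)
  apply (elim conjE)
  apply (rule main_core[OF assms])
  apply assumption+
  done

end
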